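(* The poset $(\mathcal{F}_{\mathrm{ord}}(n),\le)$ is isomorphic to the Tamari lattice $\mathrm{Tam}_n$.
   Context: An ordered forest is a finite forest of rooted trees in which the children of each vertex are linearly ordered and the trees are linearly ordered (left to right); $\mathcal{F}_{\mathrm{ord}}(n)$ is the set of ordered forests on $n$ vertices up to isomorphism. Operation on a vertex $v$: if $v$ is a leaf nothing changes; otherwise the rightmost child $v'$ of $v$ (with its subtree) is detached from $v$ and either attached to the parent $w$ of $v$ immediately to the right of $v$, or, if $v$ is a root, made a new tree immediately to the right of the tree of $v$. $F'\lessdot F$ means $F'$ is obtained from $F$ by operating on a non-leaf vertex, and $\le$ is the reflexive-transitive closure of $\lessdot$. $\mathrm{Tam}_n$ is (isomorphic to) the set $\mathrm{Av}_n(312)$ of permutations with no $i_1<i_2<i_3$ and $\sigma(i_1)>\sigma(i_3)>\sigma(i_2)$, ordered as a subposet of $S_n$ under the right weak order (generated by $\sigma\circ(i\ i{+}1)\lessdot\sigma$ whenever $\sigma(i)>\sigma(i+1)$). *)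

theory Defs
  imports "HOL-Combinatorics.Combinatorics"
begin

text \<open>Ordered (plane) trees and forests. An ordered forest up to isomorphism is
exactly a list of ordered trees; an ordered tree is a root with a list of
(ordered) subtrees, listed left to right.\<close>

datatype otree = Node "otree list"

type_synonym oforest = "otree list"

fun tsize :: "otree \<Rightarrow> nat" where
  "tsize (Node cs) = Suc (sum_list (map tsize cs))"

definition fsize :: "oforest \<Rightarrow> nat" where
  "fsize F = sum_list (map tsize F)"

definition Ford :: "nat \<Rightarrow> oforest set" where
  "Ford n = {F. fsize F = n}"

text \<open>forest_step F F' means F' is obtained from F by operating on a non-leaf
vertex (i.e. F' \<lessdot> F). Operating on a root moves its rightmost child to a new
tree right after it; operating on a non-root vertex v with parent w is the same
operation performed on the list of children of w.\<close>

inductive forest_step :: "oforest \<Rightarrow> oforest \<Rightarrow> bool" where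
  root: "forest_step (ts1 @ Node (cs @ [c]) # ts2) (ts1 @ Node cs # c # ts2)"
| deep: "forest_step cs cs' \<Longrightarrow>
         forest_step (ts1 @ Node cs # ts2) (ts1 @ Node cs' # ts2)"

definition forest_le :: "oforest \<Rightarrow> oforest \<Rightarrow> bool" where
  "forest_le F' F \<longleftrightarrow> forest_step\<^sup>*\<^sup>* F F'"

definition avoids312 :: "nat \<Rightarrow> (nat \<Rightarrow> nat) \<Rightarrow> bool" where
  "avoids312 n \<sigma> \<longleftrightarrow> \<not> (\<exists>i1 i2 i3. 1 \<le> i1 \<and> i1 < i2 \<and> i2 < i3 \<and> i3 \<le> n \<and> i2 < i3 \<and> \<sigma> i1 > \<sigma> i3 \<and> \<sigma> i3 > \<sigma> i2)"

definition Av312 :: "nat \<Rightarrow> (nat \<Rightarrow> nat) set" where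
  "Av312 n = {\<sigma>. \<sigma> permutes {1..n} \<and> avoids312 n \<sigma>}"

text \<open>Right weak order on S_n: weak_step n \<sigma> \<tau> means \<tau> = \<sigma> \<circ> (i i+1) \<lessdot> \<sigma>
with \<sigma>(i) > \<sigma>(i+1).\<close>
definition weak_step :: "nat \<Rightarrow> (nat \<Rightarrow> nat) \<Rightarrow> (nat \<Rightarrow> nat) \<Rightarrow> bool" where
  "weak_step n \<sigma> \<tau> \<longleftrightarrow>
     (\<exists>i. 1 \<le> i \<and> i < n \<and> \<sigma> i > \<sigma> (Suc i) \<and> \<tau> = \<sigma> \<circ> transpose i (Suc i))"

definition weak_le :: "nat \<Rightarrow> (nat \<Rightarrow> nat) \<Rightarrow> (nat \<Rightarrow> nat) \<Rightarrow> bool" where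
  "weak_le n \<tau> \<sigma> \<longleftrightarrow> (weak_step n)\<^sup>*\<^sup>* \<sigma> \<tau>"

end

theory Submission
  imports Defs
begin


lemma fsize_Nil[simp]: "fsize [] = 0" by (simp add: fsize_def)
lemma fsize_Cons[simp]: "fsize (Node cs # ts) = Suc (fsize cs + fsize ts)" by (simp add: fsize_def)
lemma fsize_append[simp]: "fsize (xs @ ys) = fsize xs + fsize ys" by (simp add: fsize_def)
lemma tsize_pos: "0 < tsize t" by (cases t) auto
lemma fsize_0_iff: "fsize F = 0 \<longleftrightarrow> F = []"
  by (cases F) (auto simp: fsize_def tsize_pos)

fun pw :: "nat \<Rightarrow> oforest \<Rightarrow> nat list" where
  "pw k [] = []"
| "pw k (Node cs # ts) = pw (Suc k) cs @ [Suc k] @ pw (Suc k + fsize cs) ts"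

fun D :: "nat \<Rightarrow> oforest \<Rightarrow> (nat \<times> nat) set" where
  "D k [] = {}"
| "D k (Node cs # ts) = {(Suc k, b) | b. Suc k < b \<and> b \<le> Suc k + fsize cs}
      \<union> D (Suc k) cs \<union> D (Suc k + fsize cs) ts"

lemma pw_append: "pw k (xs @ ys) = pw k xs @ pw (k + fsize xs) ys"
proof (induction xs arbitrary: k)
  case (Cons t xs) then show ?case by (cases t) (simp add: add.assoc)
qed simp

lemma D_append: "D k (xs @ ys) = D k xs \<union> D (k + fsize xs) ys"
proof (induction xs arbitrary: k)
  case (Cons t xs) then show ?case by (cases t) (auto simp add: add.assoc)
qed simp

lemma pw_props: "length (pw k F) = fsize F \<and> set (pw k F) = {Suc k..k + fsize F} \<and> distinct (pw k F)"
proof (induction k F rule: pw.induct)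
  case (2 k cs ts)
  then show ?case by (auto simp: set_eq_iff)
qed simp

lemma D_range: "(a,b) \<in> D k F \<Longrightarrow> k < a \<and> a < b \<and> b \<le> k + fsize F"
  by (induction k F rule: D.induct) auto


fun pairs :: "nat list \<Rightarrow> (nat \<times> nat) set" where
  "pairs [] = {}"
| "pairs (x # xs) = (\<lambda>b. (x, b)) ` set xs \<union> pairs xs"

fun triples :: "nat list \<Rightarrow> (nat \<times> nat \<times> nat) set" where
  "triples [] = {}"
| "triples (x # xs) = {(x, y, z) | y z. (y, z) \<in> pairs xs} \<union> triples xs"

definition winv :: "nat list \<Rightarrow> (nat \<times> nat) set" where
  "winv w = {(a, b). a < b \<and> (b, a) \<in> pairs w}"

definition has312 :: "nat list \<Rightarrow> bool" where
  "has312 w \<longleftrightarrow> (\<exists>z x y. (z, x, y) \<in> triples w \<and> x < y \<and> y < z)"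

lemma pairs_append: "pairs (A @ B) = pairs A \<union> pairs B \<union> set A \<times> set B"
  by (induction A) auto

lemma pairs_sub: "pairs w \<subseteq> set w \<times> set w"
  by (induction w) auto

lemma triples_append: "triples (A @ B) = triples A \<union> triples B
   \<union> {(x, y, z). (x, y) \<in> pairs A \<and> z \<in> set B} \<union> {(x, y, z). x \<in> set A \<and> (y, z) \<in> pairs B}"
  by (induction A) (auto simp: pairs_append)

lemma triples_sub: "(x,y,z) \<in> triples w \<Longrightarrow> x \<in> set w \<and> y \<in> set w \<and> z \<in> set w"
  by (induction w) (auto dest: pairs_sub[THEN subsetD])

lemma pairs_nth: "(a, b) \<in> pairs w \<longleftrightarrow> (\<exists>i j. i < j \<and> j < length w \<and> w ! i = a \<and> w ! j = b)"
proof (induction w)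
  case Nil then show ?case by simp
next
  case (Cons x xs)
  show ?case
  proof
    assume "(a, b) \<in> pairs (x # xs)"
    then consider "a = x" "b \<in> set xs" | "(a, b) \<in> pairs xs" by auto
    then show "\<exists>i j. i < j \<and> j < length (x # xs) \<and> (x # xs) ! i = a \<and> (x # xs) ! j = b"
    proof cases
      case 1
      then obtain j where "j < length xs" "xs ! j = b" by (auto simp: in_set_conv_nth)
      then show ?thesis using 1 by (intro exI[of _ 0] exI[of _ "Suc j"]) auto
    next
      case 2
      then obtain i j where "i < j \<and> j < length xs \<and> xs ! i = a \<and> xs ! j = b" using Cons by auto
      then show ?thesis by (intro exI[of _ "Suc i"] exI[of _ "Suc j"]) auto
    qed
  next
    assume "\<exists>i j. i < j \<and> j < length (x # xs) \<and> (x # xs) ! i = a \<and> (x # xs) ! j = b"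
    then obtain i j where ij: "i < j" "j < length (x # xs)" "(x # xs) ! i = a" "(x # xs) ! j = b" by blast
    then obtain j' where j': "j = Suc j'" by (cases j) auto
    show "(a, b) \<in> pairs (x # xs)"
    proof (cases i)
      case 0
      then show ?thesis using ij j' by auto
    next
      case (Suc i')
      then have "(a, b) \<in> pairs xs" using Cons ij j' by auto
      then show ?thesis by simp
    qed
  qed
qed

lemma triples_nth: "(a, b, c) \<in> triples w \<longleftrightarrow>
   (\<exists>i j l. i < j \<and> j < l \<and> l < length w \<and> w ! i = a \<and> w ! j = b \<and> w ! l = c)"
proof (induction w)
  case Nil then show ?case by simp
next
  case (Cons x xs)
  show ?case
  proof
    assume "(a, b, c) \<in> triples (x # xs)"
    then consider "a = x" "(b, c) \<in> pairs xs" | "(a, b, c) \<in> triples xs" by auto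
    then show "\<exists>i j l. i < j \<and> j < l \<and> l < length (x # xs) \<and> (x # xs) ! i = a \<and> (x # xs) ! j = b \<and> (x # xs) ! l = c"
    proof cases
      case 1
      then obtain j l where "j < l \<and> l < length xs \<and> xs ! j = b \<and> xs ! l = c" by (auto simp: pairs_nth)
      then show ?thesis using 1 by (intro exI[of _ 0] exI[of _ "Suc j"] exI[of _ "Suc l"]) auto
    next
      case 2
      then obtain i j l where "i < j \<and> j < l \<and> l < length xs \<and> xs ! i = a \<and> xs ! j = b \<and> xs ! l = c" using Cons by auto
      then show ?thesis by (intro exI[of _ "Suc i"] exI[of _ "Suc j"] exI[of _ "Suc l"]) auto
    qed
  next
    assume "\<exists>i j l. i < j \<and> j < l \<and> l < length (x # xs) \<and> (x # xs) ! i = a \<and> (x # xs) ! j = b \<and> (x # xs) ! l = c"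
    then obtain i j l where ij: "i < j" "j < l" "l < length (x # xs)" "(x # xs) ! i = a" "(x # xs) ! j = b" "(x # xs) ! l = c" by blast
    then obtain j' where j': "j = Suc j'" by (cases j) auto
    then obtain l' where l': "l = Suc l'" using ij by (cases l) auto
    show "(a, b, c) \<in> triples (x # xs)"
    proof (cases i)
      case 0
      then have "(b, c) \<in> pairs xs" using ij j' l' by (auto simp: pairs_nth)
      then show ?thesis using 0 ij by auto
    next
      case (Suc i')
      then have "(a, b, c) \<in> triples xs" using Cons ij j' l' by auto
      then show ?thesis by simp
    qed
  qed
qed


lemma winv_append: "winv (A @ B) = winv A \<union> winv B \<union> {(a, b). a < b \<and> b \<in> set A \<and> a \<in> set B}"
  by (auto simp: winv_def pairs_append)

lemma winv_Cons: "winv (x # B) = winv B \<union> {(a, x) | a. a < x \<and> a \<in> set B}"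
  by (auto simp: winv_def)

lemma winv_Nil[simp]: "winv [] = {}" by (simp add: winv_def)

lemma winv_pw: "winv (pw k F) = D k F"
proof (induction k F rule: pw.induct)
  case (1 k) then show ?case by simp
next
  case (2 k cs ts)
  have s1: "set (pw (Suc k) cs) = {Suc (Suc k)..Suc k + fsize cs}" using pw_props[of "Suc k" cs] by simp
  have s2: "set (pw (Suc (k + fsize cs)) ts) = {Suc (Suc k + fsize cs)..Suc k + fsize cs + fsize ts}"
    using pw_props[of "Suc k + fsize cs" ts] by simp
  have "winv (pw k (Node cs # ts)) = winv (pw (Suc k) cs) \<union> winv (pw (Suc k + fsize cs) ts)
     \<union> {(a, b). a < b \<and> b \<in> set (pw (Suc k) cs) \<and> a = Suc k}"
    unfolding pw.simps winv_append append.simps winv_Cons s1 by (auto simp: s2)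
  also have "\<dots> = D k (Node cs # ts)" using 2 s1 by auto
  finally show ?case .
qed


lemma has312_append: "has312 (A @ B) \<longleftrightarrow> has312 A \<or> has312 B \<or>
   (\<exists>z x y. (z, x) \<in> pairs A \<and> y \<in> set B \<and> x < y \<and> y < z) \<or>
   (\<exists>z x y. z \<in> set A \<and> (x, y) \<in> pairs B \<and> x < y \<and> y < z)"
  unfolding has312_def triples_append by blast

lemma has312_Cons: "has312 (z # B) \<longleftrightarrow> has312 B \<or> (\<exists>x y. (x, y) \<in> pairs B \<and> x < y \<and> y < z)"
  unfolding has312_def by auto

lemma no312_pw: "\<not> has312 (pw k F)"
proof (induction k F rule: pw.induct)
  case (1 k) then show ?case by (simp add: has312_def)
next
  case (2 k cs ts)
  have s1: "set (pw (Suc k) cs) = {Suc (Suc k)..Suc k + fsize cs}" using pw_props[of "Suc k" cs] by simp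
  have s2: "set (pw (Suc (k + fsize cs)) ts) = {Suc (Suc k + fsize cs)..Suc k + fsize cs + fsize ts}"
    using pw_props[of "Suc k + fsize cs" ts] by simp
  define A where "A = pw (Suc k) cs"
  define B where "B = pw (Suc (k + fsize cs)) ts"
  have sA: "\<And>x. x \<in> set A \<Longrightarrow> Suc k < x \<and> x \<le> Suc k + fsize cs" using s1 unfolding A_def by auto
  have sB: "\<And>x. x \<in> set B \<Longrightarrow> Suc k + fsize cs < x" using s2 unfolding B_def by auto
  have pA: "\<And>x y. (x, y) \<in> pairs A \<Longrightarrow> x \<in> set A \<and> y \<in> set A" using pairs_sub by blast
  have pB: "\<And>x y. (x, y) \<in> pairs (Suc k # B) \<Longrightarrow> x \<in> set (Suc k # B) \<and> y \<in> set (Suc k # B)"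
    using pairs_sub by blast
  have pB': "\<And>x y. (x, y) \<in> pairs B \<Longrightarrow> x \<in> set B \<and> y \<in> set B" using pairs_sub by blast
  have h1: "\<not> has312 A" "\<not> has312 B" using 2 unfolding A_def B_def by auto
  have h2: "\<not> has312 (Suc k # B)"
    unfolding has312_Cons using h1(2) pB' sB by fastforce
  have h3: "\<not> (\<exists>z x y. (z, x) \<in> pairs A \<and> y \<in> set (Suc k # B) \<and> x < y \<and> y < z)"
  proof
    assume "\<exists>z x y. (z, x) \<in> pairs A \<and> y \<in> set (Suc k # B) \<and> x < y \<and> y < z"
    then obtain z x y where "(z, x) \<in> pairs A" "y \<in> set (Suc k # B)" "x < y" "y < z" by blast
    then show False using pA[of z x] sA[of z] sA[of x] sB[of y] by auto
  qed
  have h4: "\<not> (\<exists>z x y. z \<in> set A \<and> (x, y) \<in> pairs (Suc k # B) \<and> x < y \<and> y < z)"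
  proof
    assume "\<exists>z x y. z \<in> set A \<and> (x, y) \<in> pairs (Suc k # B) \<and> x < y \<and> y < z"
    then obtain z x y where "z \<in> set A" "(x, y) \<in> pairs (Suc k # B)" "x < y" "y < z" by blast
    then show False using pB[of x y] sA[of z] sB[of y] sB[of x] by auto
  qed
  have e: "pw k (Node cs # ts) = A @ (Suc k # B)" unfolding A_def B_def by simp
  show ?case unfolding e has312_append[of A "Suc k # B"] using h1(1) h2 h3 h4 by blast
qed


lemma step_fsize: "forest_step F F' \<Longrightarrow> fsize F' = fsize F"
  by (induction rule: forest_step.induct) (auto simp: fsize_def)

lemma step_cons: "forest_step F F' \<Longrightarrow> forest_step (t # F) (t # F')"
proof (induction rule: forest_step.induct)
  case (root ts1 cs c ts2)
  then show ?case using forest_step.root[of "t # ts1" cs c ts2] by simp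
next
  case (deep cs cs' ts1 ts2)
  then show ?case using forest_step.deep[of cs cs' "t # ts1" ts2] by simp
qed

lemma D_inj: "fsize F = fsize G \<Longrightarrow> D k F = D k G \<Longrightarrow> F = G"
proof (induction k F arbitrary: G rule: D.induct)
  case (1 k)
  then show ?case by (simp add: fsize_0_iff)
next
  case (2 k cs ts)
  obtain ds us where G: "G = Node ds # us"
  proof -
    have "G \<noteq> []" using 2(3) by auto
    then obtain g us where "G = g # us" by (cases G) auto
    moreover obtain ds where "g = Node ds" by (cases g)
    ultimately show ?thesis using that by blast
  qed
  have key: "fsize cs \<le> fsize ds" if "D k (Node cs # ts) = D k (Node ds # us)" for cs ts ds us
  proof (rule ccontr)
    assume "\<not> fsize cs \<le> fsize ds"
    then have "(Suc k, Suc k + fsize cs) \<in> D k (Node cs # ts)" by auto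
    then have "(Suc k, Suc k + fsize cs) \<in> D k (Node ds # us)" using that by metis
    then show False using \<open>\<not> fsize cs \<le> fsize ds\<close>
      D_range[of "Suc k" "Suc k + fsize cs" "Suc k" ds] D_range[of "Suc k" "Suc k + fsize cs" "Suc k + fsize ds" us]
      by auto
  qed
  have eqs: "fsize cs = fsize ds" using key[of cs ts ds us] key[of ds us cs ts] 2(4) G
    by (simp add: le_antisym)
  have fs: "fsize ts = fsize us" using 2(3) G eqs by simp
  have r1: "D (Suc k) cs = {p \<in> D k (Node cs # ts). Suc k < fst p \<and> snd p \<le> Suc k + fsize cs}"
    for k cs ts by (auto dest: D_range)
  have r2: "D (Suc k + fsize cs) ts = {p \<in> D k (Node cs # ts). Suc k + fsize cs < fst p}"
    for k cs ts by (auto dest: D_range)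
  have "D (Suc k) cs = D (Suc k) ds" using r1[of k cs ts] r1[of k ds us] 2(4) G eqs by metis
  then have "cs = ds" using 2(1)[of ds] eqs by blast
  moreover have "D (Suc k + fsize cs) ts = D (Suc k + fsize cs) us"
    using r2[of k cs ts] r2[of k ds us] 2(4) G eqs by metis
  then have "ts = us" using 2(2)[of us] fs by blast
  ultimately show ?case using G by simp
qed

definition goodR :: "(nat \<times> nat) set \<Rightarrow> bool" where
  "goodR R \<longleftrightarrow> (\<forall>a b c. (a, b) \<in> R \<longrightarrow> (b, c) \<in> R \<longrightarrow> (a, c) \<in> R)
     \<and> (\<forall>a b c. (a, c) \<in> R \<longrightarrow> a < b \<longrightarrow> b < c \<longrightarrow> (a, b) \<in> R)"

lemma D_trans: "(a, b) \<in> D k F \<Longrightarrow> (b, c) \<in> D k F \<Longrightarrow> (a, c) \<in> D k F"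
proof (induction k F arbitrary: a b c rule: D.induct)
  case (1 k) then show ?case by simp
next
  case (2 k cs ts)
  have R1: "\<And>x y. (x,y) \<in> D (Suc k) cs \<Longrightarrow> Suc k < x \<and> x < y \<and> y \<le> Suc k + fsize cs"
    using D_range by fastforce
  have R2: "\<And>x y. (x,y) \<in> D (Suc k + fsize cs) ts \<Longrightarrow> Suc k + fsize cs < x \<and> x < y"
    using D_range by fastforce
  note IH1 = 2(1) and IH2 = 2(2) and P = 2(3,4)
  consider "a = Suc k" "Suc k < b" "b \<le> Suc k + fsize cs" | "(a, b) \<in> D (Suc k) cs"
    | "(a, b) \<in> D (Suc k + fsize cs) ts" using P(1) by auto
  then show ?case
  proof cases
    case 1
    then have "(b, c) \<in> D (Suc k) cs" using P(2) R2[of b c] by auto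
    then show ?thesis using 1 R1[of b c] by auto
  next
    case 2
    then have "(b, c) \<in> D (Suc k) cs" using P(2) R1[of a b] R2[of b c] by auto
    then show ?thesis using \<open>(a, b) \<in> D (Suc k) cs\<close> IH1 by auto
  next
    case 3
    then have "(b, c) \<in> D (Suc k + fsize cs) ts" using P(2) R1[of b c] R2[of a b] by auto
    then show ?thesis using \<open>(a, b) \<in> D (Suc k + fsize cs) ts\<close> IH2 by auto
  qed
qed

lemma D_interval: "(a, c) \<in> D k F \<Longrightarrow> a < b \<Longrightarrow> b < c \<Longrightarrow> (a, b) \<in> D k F"
proof (induction k F arbitrary: a c rule: D.induct)
  case (1 k) then show ?case by simp
next
  case (2 k cs ts)
  have R1: "\<And>x y. (x,y) \<in> D (Suc k) cs \<Longrightarrow> Suc k < x \<and> x < y \<and> y \<le> Suc k + fsize cs"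
    using D_range by fastforce
  have R2: "\<And>x y. (x,y) \<in> D (Suc k + fsize cs) ts \<Longrightarrow> Suc k + fsize cs < x \<and> x < y"
    using D_range by fastforce
  note IH1 = 2(1) and IH2 = 2(2) and P = 2(3-5)
  consider "a = Suc k" "Suc k < c" "c \<le> Suc k + fsize cs" | "(a, c) \<in> D (Suc k) cs"
    | "(a, c) \<in> D (Suc k + fsize cs) ts" using P(1) by auto
  then show ?case
  proof cases
    case 1
    then show ?thesis using P by auto
  next
    case 2
    then show ?thesis using IH1[OF 2 P(2,3)] by simp
  next
    case 3
    then show ?thesis using IH2[OF 3 P(2,3)] by simp
  qed
qed

lemma goodR_D: "goodR (D k F)"
  unfolding goodR_def using D_trans D_interval by blast


lemma reduce:
  "(a, b) \<in> D k G \<Longrightarrow> (a, b) \<notin> R \<Longrightarrow> goodR R \<Longrightarrow>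
   \<exists>G'. forest_step G G' \<and> fsize G' = fsize G \<and> D k G \<inter> R \<subseteq> D k G' \<and> D k G' \<subset> D k G"
proof (induction k G arbitrary: a b rule: D.induct)
  case (1 k) then show ?case by simp
next
  case (2 k ds us)
  have Rds: "\<And>x y. (x,y) \<in> D (Suc k) ds \<Longrightarrow> Suc k < x \<and> x < y \<and> y \<le> Suc k + fsize ds"
    using D_range by fastforce
  have Rus: "\<And>x y. (x,y) \<in> D (Suc k + fsize ds) us \<Longrightarrow> Suc k + fsize ds < x \<and> x < y"
    using D_range by fastforce
  have caseds: "\<exists>G'. forest_step (Node ds # us) G' \<and> fsize G' = fsize (Node ds # us) \<and>
      D k (Node ds # us) \<inter> R \<subseteq> D k G' \<and> D k G' \<subset> D k (Node ds # us)"
    if h: "(a', b') \<in> D (Suc k) ds" "(a', b') \<notin> R" for a' b'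
  proof -
    obtain ds' where ds': "forest_step ds ds'" "fsize ds' = fsize ds" "D (Suc k) ds \<inter> R \<subseteq> D (Suc k) ds'"
      "D (Suc k) ds' \<subset> D (Suc k) ds"
      using 2(1)[OF h 2(5)] by blast
    have Rds': "\<And>x y. (x,y) \<in> D (Suc k) ds' \<Longrightarrow> Suc k < x \<and> x < y \<and> y \<le> Suc k + fsize ds"
      using D_range ds'(2) by fastforce
    obtain p where p: "p \<in> D (Suc k) ds" "p \<notin> D (Suc k) ds'" using ds'(4) by blast
    have "forest_step (Node ds # us) (Node ds' # us)"
      using forest_step.deep[OF ds'(1), of "[]" us] by simp
    moreover have "D k (Node ds # us) \<inter> R \<subseteq> D k (Node ds' # us)"
      using ds'(2,3) by auto
    moreover have "D k (Node ds' # us) \<subseteq> D k (Node ds # us)"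
      using ds'(2,4) by auto
    moreover have "p \<notin> D k (Node ds' # us)" "p \<in> D k (Node ds # us)"
      using p ds'(2) Rds[of "fst p" "snd p"] Rus[of "fst p" "snd p"] by auto
    ultimately show ?thesis using ds'(2) by (intro exI[of _ "Node ds' # us"]) auto
  qed
  note IH2 = 2(2) and P = 2(3-5)
  have iv: "\<And>a b c. (a,c) \<in> R \<Longrightarrow> a<b \<Longrightarrow> b<c \<Longrightarrow> (a,b) \<in> R"
    and tr: "\<And>a b c. (a,b) \<in> R \<Longrightarrow> (b,c) \<in> R \<Longrightarrow> (a,c) \<in> R"
    using P(3) unfolding goodR_def by blast+
  consider "(a, b) \<in> D (Suc k) ds" | "(a, b) \<in> D (Suc k + fsize ds) us"
    | "a = Suc k" "Suc k < b" "b \<le> Suc k + fsize ds"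
    using P(1) by auto
  then show ?case
  proof cases
    case 1
    then show ?thesis using caseds P(2) by blast
  next
    case 2
    obtain us' where us': "forest_step us us'" "fsize us' = fsize us"
      "D (Suc k + fsize ds) us \<inter> R \<subseteq> D (Suc k + fsize ds) us'"
      "D (Suc k + fsize ds) us' \<subset> D (Suc k + fsize ds) us"
      using IH2[OF 2 P(2,3)] by blast
    obtain p where p: "p \<in> D (Suc k + fsize ds) us" "p \<notin> D (Suc k + fsize ds) us'" using us'(4) by blast
    have "forest_step (Node ds # us) (Node ds # us')"
      using step_cons[OF us'(1)] by simp
    moreover have "D k (Node ds # us) \<inter> R \<subseteq> D k (Node ds # us')"
      using us'(3) by auto
    moreover have "D k (Node ds # us') \<subseteq> D k (Node ds # us)"
      using us'(4) by auto
    moreover have "p \<notin> D k (Node ds # us')" "p \<in> D k (Node ds # us)"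
      using p Rds[of "fst p" "snd p"] Rus[of "fst p" "snd p"] by auto
    ultimately show ?thesis using us'(2) by (intro exI[of _ "Node ds # us'"]) auto
  next
    case 3
    then have "ds \<noteq> []" by auto
    then obtain ds0 d where dsd: "ds = ds0 @ [d]" by (metis rev_exhaust)
    obtain es where d: "d = Node es" by (cases d)
    define dr where "dr = Suc (Suc k + fsize ds0)"
    have fds: "fsize ds = fsize ds0 + Suc (fsize es)" using dsd d by simp
    show ?thesis
    proof (cases "(Suc k, dr) \<in> R")
      case False
      let ?G' = "Node ds0 # Node es # us"
      have st: "forest_step (Node ds # us) ?G'"
        using forest_step.root[of "[]" ds0 "Node es" us] dsd d by simp
      have DG: "D k (Node ds # us) = {(Suc k, x) | x. Suc k < x \<and> x \<le> Suc k + fsize ds}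
          \<union> D (Suc k) ds0 \<union> {(dr, x) | x. dr < x \<and> x \<le> dr + fsize es} \<union> D dr es
          \<union> D (Suc k + fsize ds) us"
        using dsd d by (simp add: D_append dr_def Un_ac)
      have DG': "D k ?G' = {(Suc k, x) | x. Suc k < x \<and> x \<le> Suc k + fsize ds0}
          \<union> D (Suc k) ds0 \<union> {(dr, x) | x. dr < x \<and> x \<le> dr + fsize es} \<union> D dr es
          \<union> D (Suc k + fsize ds) us"
        using fds by (simp add: dr_def Un_ac add.assoc)
      have "D k (Node ds # us) \<inter> R \<subseteq> D k ?G'"
      proof
        fix p assume p: "p \<in> D k (Node ds # us) \<inter> R"
        show "p \<in> D k ?G'"
        proof (rule ccontr)
          assume np: "p \<notin> D k ?G'"
          then obtain x where px: "p = (Suc k, x)" "Suc k + fsize ds0 < x" "x \<le> Suc k + fsize ds"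
            using p unfolding DG DG' by auto
          have "(Suc k, dr) \<in> R"
          proof (cases "x = dr")
            case True then show ?thesis using p px by simp
          next
            case False
            then have "dr < x" using px dr_def by simp
            then show ?thesis using iv[of "Suc k" x dr] p px dr_def by auto
          qed
          then show False using \<open>(Suc k, dr) \<notin> R\<close> by simp
        qed
      qed
      moreover have "D k ?G' \<subseteq> D k (Node ds # us)" unfolding DG DG' using fds by auto
      moreover have "(Suc k, dr) \<in> D k (Node ds # us)" unfolding DG using fds dr_def by auto
      moreover have "(Suc k, dr) \<notin> D k ?G'" unfolding DG' using dr_def
          D_range[of "Suc k" dr "Suc k" ds0] D_range[of "Suc k" dr dr es]
          D_range[of "Suc k" dr "Suc k + fsize ds" us] by auto
      ultimately show ?thesis using st fds by (intro exI[of _ ?G']) auto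
    next
      case True
      have "(Suc k, b) \<notin> R" using P(2) 3 by simp
      have "dr < b"
      proof (rule ccontr)
        assume "\<not> dr < b"
        then have "b = dr \<or> b < dr" by auto
        then have "(Suc k, b) \<in> R" using True iv[of "Suc k" dr b] 3 by auto
        then show False using \<open>(Suc k, b) \<notin> R\<close> by simp
      qed
      have "(dr, b) \<in> D (Suc k) ds"
        using dsd d \<open>dr < b\<close> 3 fds by (auto simp: D_append dr_def)
      moreover have "(dr, b) \<notin> R"
        using True \<open>(Suc k, b) \<notin> R\<close> tr[of "Suc k" dr b] by blast
      ultimately show ?thesis using caseds by blast
    qed
  qed
qed

lemma D_finite: "finite (D k F)"
proof -
  have "D k F \<subseteq> {..k + fsize F} \<times> {..k + fsize F}" using D_range by fastforce
  then show ?thesis by (rule finite_subset) auto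
qed

lemma D_sub_steps: "fsize F = fsize G \<Longrightarrow> D k F \<subseteq> D k G \<Longrightarrow> forest_step\<^sup>*\<^sup>* G F"
proof (induction "card (D k G)" arbitrary: G rule: less_induct)
  case less
  show ?case
  proof (cases "D k F = D k G")
    case True
    then show ?thesis using D_inj less.prems by auto
  next
    case False
    then obtain a b where ab: "(a, b) \<in> D k G" "(a, b) \<notin> D k F" using less.prems by auto
    obtain G' where G': "forest_step G G'" "fsize G' = fsize G" "D k G \<inter> D k F \<subseteq> D k G'"
      "D k G' \<subset> D k G"
      using reduce[OF ab goodR_D] by blast
    have "card (D k G') < card (D k G)" using G'(4) D_finite by (rule psubset_card_mono[rotated])
    then have "forest_step\<^sup>*\<^sup>* G' F" using less.hyps[of G'] G' less.prems by auto
    then show ?thesis using G'(1) by (meson converse_rtranclp_into_rtranclp)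
  qed
qed



definition wstep :: "nat list \<Rightarrow> nat list \<Rightarrow> bool" where
  "wstep w w' \<longleftrightarrow> (\<exists>P a b S. w = P @ [a, b] @ S \<and> b < a \<and> w' = P @ [b, a] @ S)"

lemma wstep_ctx: "wstep w w' \<Longrightarrow> wstep (P @ w @ S) (P @ w' @ S)"
  unfolding wstep_def by (metis append.assoc)

lemma wsteps_ctx: "wstep\<^sup>*\<^sup>* w w' \<Longrightarrow> wstep\<^sup>*\<^sup>* (P @ w @ S) (P @ w' @ S)"
  by (induction rule: rtranclp_induct) (auto intro: rtranclp.rtrancl_into_rtrancl wstep_ctx)

lemma wsteps_block: "\<forall>b\<in>set B. x < b \<Longrightarrow> wstep\<^sup>*\<^sup>* (P @ B @ [x] @ S) (P @ [x] @ B @ S)"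
proof (induction B arbitrary: S rule: rev_induct)
  case Nil then show ?case by simp
next
  case (snoc b B)
  have "wstep (P @ B @ [b, x] @ S) (P @ B @ [x, b] @ S)"
    unfolding wstep_def using snoc.prems by (intro exI[of _ "P @ B"] exI[of _ b] exI[of _ x] exI[of _ S]) auto
  moreover have "wstep\<^sup>*\<^sup>* (P @ B @ [x] @ (b # S)) (P @ [x] @ B @ (b # S))"
    using snoc by auto
  ultimately show ?case by (auto intro: converse_rtranclp_into_rtranclp)
qed

lemma step_wsteps: "forest_step G G' \<Longrightarrow> wstep\<^sup>*\<^sup>* (pw k G) (pw k G')"
proof (induction arbitrary: k rule: forest_step.induct)
  case (root ts1 cs c ts2)
  obtain es where c: "c = Node es" by (cases c)
  let ?m = "Suc (k + fsize ts1)"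
  let ?B = "pw (?m + fsize cs) [c]"
  have "\<forall>b\<in>set ?B. ?m < b" using pw_props[of "?m + fsize cs" "[c]"] by auto
  then have "wstep\<^sup>*\<^sup>* ((pw k ts1 @ pw ?m cs) @ ?B @ [?m] @ pw (?m + fsize cs + fsize [c]) ts2)
     ((pw k ts1 @ pw ?m cs) @ [?m] @ ?B @ pw (?m + fsize cs + fsize [c]) ts2)"
    by (rule wsteps_block)
  then show ?case using c by (simp add: pw_append add.assoc)
next
  case (deep cs cs' ts1 ts2)
  have "fsize cs' = fsize cs" using deep.hyps step_fsize by blast
  then show ?case using wsteps_ctx[OF deep.IH[of "Suc (k + fsize ts1)"], of "pw k ts1"
        "[Suc (k + fsize ts1)] @ pw (Suc (k + fsize ts1) + fsize cs) ts2"]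
    by (simp add: pw_append)
qed

definition wperm :: "nat list \<Rightarrow> nat \<Rightarrow> nat" where
  "wperm w = (\<lambda>i. if 1 \<le> i \<and> i \<le> length w then w ! (i - 1) else i)"

lemma wstep_length: "wstep w w' \<Longrightarrow> length w' = length w"
  unfolding wstep_def by auto

lemma wstep_weak: "wstep w w' \<Longrightarrow> weak_step (length w) (wperm w) (wperm w')"
proof -
  assume "wstep w w'"
  then obtain P a b S where w: "w = P @ [a, b] @ S" "b < a" "w' = P @ [b, a] @ S"
    unfolding wstep_def by blast
  let ?i = "Suc (length P)"
  have "wperm w' = wperm w \<circ> transpose ?i (Suc ?i)"
  proof
    fix x
    show "wperm w' x = (wperm w \<circ> transpose ?i (Suc ?i)) x"
    proof (cases "x = ?i \<or> x = Suc ?i")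
      case True
      then show ?thesis using w by (auto simp: wperm_def nth_append)
    next
      case False
      then have "transpose ?i (Suc ?i) x = x" by (auto simp: transpose_def)
      moreover have "wperm w' x = wperm w x"
        using False w by (auto simp: wperm_def nth_append nth_Cons split: nat.splits)
      ultimately show ?thesis by simp
    qed
  qed
  moreover have "wperm w ?i > wperm w (Suc ?i)" using w by (auto simp: wperm_def nth_append)
  ultimately show ?thesis unfolding weak_step_def using w
    by (intro exI[of _ ?i]) auto
qed

lemma wsteps_weak: "wstep\<^sup>*\<^sup>* w w' \<Longrightarrow> (weak_step (length w))\<^sup>*\<^sup>* (wperm w) (wperm w')"
proof (induction rule: rtranclp_induct)
  case base then show ?case by simp
next
  case (step y z)
  have "length y = length w"
    using step.hyps(1) by (induction rule: rtranclp_induct) (auto dest: wstep_length)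
  then show ?case using step wstep_weak[OF step.hyps(2)] by (metis rtranclp.rtrancl_into_rtrancl)
qed

definition finv :: "nat \<Rightarrow> (nat \<Rightarrow> nat) \<Rightarrow> (nat \<times> nat) set" where
  "finv n \<sigma> = {(a, b). a < b \<and> (\<exists>i j. 1 \<le> i \<and> i < j \<and> j \<le> n \<and> \<sigma> i = b \<and> \<sigma> j = a)}"

lemma weak_step_finv: "weak_step n \<sigma> \<tau> \<Longrightarrow> finv n \<tau> \<subseteq> finv n \<sigma>"
proof
  fix p assume st: "weak_step n \<sigma> \<tau>" and p: "p \<in> finv n \<tau>"
  obtain i where i: "1 \<le> i" "i < n" "\<sigma> i > \<sigma> (Suc i)" "\<tau> = \<sigma> \<circ> transpose i (Suc i)"
    using st unfolding weak_step_def by blast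
  obtain a b x y where ab: "p = (a, b)" "a < b" "1 \<le> x" "x < y" "y \<le> n" "\<tau> x = b" "\<tau> y = a"
    using p unfolding finv_def by blast
  let ?t = "transpose i (Suc i)"
  have "\<sigma> (?t x) = b" "\<sigma> (?t y) = a" using ab i by auto
  moreover have "1 \<le> ?t x" "?t y \<le> n" "1 \<le> ?t y" "?t x \<le> n"
    using ab i by (auto simp: transpose_def)
  moreover have "?t x < ?t y \<or> (x = i \<and> y = Suc i)"
    using ab by (auto simp: transpose_def)
  moreover have "\<not> (x = i \<and> y = Suc i)"
    using ab i by auto
  ultimately show "p \<in> finv n \<sigma>" unfolding finv_def using ab by auto
qed

lemma weak_le_finv: "weak_le n \<tau> \<sigma> \<Longrightarrow> finv n \<tau> \<subseteq> finv n \<sigma>"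
  unfolding weak_le_def
  by (induction rule: rtranclp_induct) (auto dest: weak_step_finv)

lemma finv_wperm: "finv (length w) (wperm w) = winv w"
proof -
  have "(a, b) \<in> finv (length w) (wperm w) \<longleftrightarrow> (a, b) \<in> winv w" for a b
  proof
    assume "(a, b) \<in> finv (length w) (wperm w)"
    then obtain i j where h: "a < b" "1 \<le> i" "i < j" "j \<le> length w" "wperm w i = b" "wperm w j = a"
      unfolding finv_def by blast
    then have "i - 1 < j - 1" "j - 1 < length w" "w ! (i - 1) = b" "w ! (j - 1) = a"
      by (auto simp: wperm_def)
    then show "(a, b) \<in> winv w" unfolding winv_def pairs_nth using h(1) by blast
  next
    assume "(a, b) \<in> winv w"
    then obtain i j where "a < b" "i < j" "j < length w" "w ! i = b" "w ! j = a"
      unfolding winv_def pairs_nth by blast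
    then have "1 \<le> Suc i \<and> Suc i < Suc j \<and> Suc j \<le> length w \<and> wperm w (Suc i) = b \<and> wperm w (Suc j) = a"
      by (auto simp: wperm_def)
    then show "(a, b) \<in> finv (length w) (wperm w)" unfolding finv_def using \<open>a < b\<close> by blast
  qed
  then show ?thesis by auto
qed

lemma avoids_wperm: "avoids312 (length w) (wperm w) \<longleftrightarrow> \<not> has312 w"
proof
  assume n: "\<not> has312 w"
  show "avoids312 (length w) (wperm w)"
    unfolding avoids312_def
  proof
    assume "\<exists>i1 i2 i3. 1 \<le> i1 \<and> i1 < i2 \<and> i2 < i3 \<and> i3 \<le> length w \<and> i2 < i3 \<and>
      wperm w i3 < wperm w i1 \<and> wperm w i2 < wperm w i3"
    then obtain i1 i2 i3 where h: "1 \<le> i1" "i1 < i2" "i2 < i3" "i3 \<le> length w"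
      "wperm w i3 < wperm w i1" "wperm w i2 < wperm w i3" by blast
    then have h2: "i1 - 1 < i2 - 1" "i2 - 1 < i3 - 1" "i3 - 1 < length w"
      "w ! (i3 - 1) < w ! (i1 - 1)" "w ! (i2 - 1) < w ! (i3 - 1)"
      by (auto simp: wperm_def)
    then have "(w ! (i1 - 1), w ! (i2 - 1), w ! (i3 - 1)) \<in> triples w"
      unfolding triples_nth by blast
    then show False using n h2 unfolding has312_def by blast
  qed
next
  assume a: "avoids312 (length w) (wperm w)"
  show "\<not> has312 w"
  proof
    assume "has312 w"
    then obtain i j l where h: "i < j" "j < l" "l < length w" "w ! j < w ! l" "w ! l < w ! i"
      unfolding has312_def triples_nth by blast
    then have "1 \<le> Suc i \<and> Suc i < Suc j \<and> Suc j < Suc l \<and> Suc l \<le> length w \<and> Suc j < Suc l \<and>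
      wperm w (Suc l) < wperm w (Suc i) \<and> wperm w (Suc j) < wperm w (Suc l)"
      by (auto simp: wperm_def)
    then show False using a unfolding avoids312_def by blast
  qed
qed


lemma downclosed:
  assumes "S \<union> T = {a..<c}" "\<forall>x\<in>S. \<forall>y\<in>T. x < y"
  shows "S = {a..<a + card S}"
proof -
  have fin: "finite S" using assms(1) by (metis finite_Un finite_atLeastLessThan)
  have sub: "S \<subseteq> {a..<a + card S}"
  proof
    fix x assume x: "x \<in> S"
    then have xa: "a \<le> x" "x < c" using assms(1) by auto
    show "x \<in> {a..<a + card S}"
    proof (rule ccontr)
      assume "x \<notin> {a..<a + card S}"
      then have "a + card S \<le> x" using xa by auto
      have "{a..x} \<subseteq> S"
      proof
        fix y assume y: "y \<in> {a..x}"
        then have "y \<in> S \<union> T" using assms(1) xa by auto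
        moreover have "y \<notin> T" using assms(2) x y by fastforce
        ultimately show "y \<in> S" by blast
      qed
      then have "card {a..x} \<le> card S" using fin by (rule card_mono[rotated])
      then show False using \<open>a + card S \<le> x\<close> by simp
    qed
  qed
  then show ?thesis using fin by (intro card_subset_eq) auto
qed

lemma ivl_rest: "X \<inter> Y = {} \<Longrightarrow> Y = {a..<b} \<Longrightarrow> Y \<union> X = {a..<c} \<Longrightarrow> a \<le> b \<Longrightarrow> X = {b..<c::nat}"
  by (metis Diff_cancel Diff_Un Int_commute Un_Diff_Int Un_commute atLeastLessThan_def Diff_Int_distrib2 ivl_diff sup_bot_left Int_Diff_Un Un_Int_eq(2))

lemma realize:
  "distinct w \<Longrightarrow> set w = {Suc k..k + length w} \<Longrightarrow> \<not> has312 w \<Longrightarrow>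
   \<exists>F. pw k F = w \<and> fsize F = length w"
proof (induction "length w" arbitrary: w k rule: less_induct)
  case less
  show ?case
  proof (cases "w = []")
    case True then show ?thesis by (intro exI[of _ "[]"]) simp
  next
    case False
    then have "Suc k \<in> set w" using less.prems(2) by (cases w) auto
    then obtain A B where w: "w = A @ Suc k # B" by (meson split_list)
    have dA: "distinct A" and dB: "distinct B" and nA: "Suc k \<notin> set A" and nB: "Suc k \<notin> set B"
      and AB: "set A \<inter> set B = {}"
      using less.prems(1) w by auto
    have nhA: "\<not> has312 A" and nhB: "\<not> has312 B"
      using less.prems(3) unfolding w has312_append[of A "Suc k # B"] has312_Cons by blast+
    have lt: "\<forall>x\<in>set A. \<forall>y\<in>set B. x < y"
    proof (intro ballI)
      fix x y assume x: "x \<in> set A" and y: "y \<in> set B"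
      show "x < y"
      proof (rule ccontr)
        assume "\<not> x < y"
        moreover have "x \<noteq> y" using AB x y by auto
        ultimately have "y < x" by simp
        moreover have "y \<in> set w" "y \<noteq> Suc k" using y nB w by auto
        then have "Suc k < y" using less.prems(2) by (metis atLeastAtMost_iff le_neq_implies_less)
        moreover have "(Suc k, y) \<in> pairs (Suc k # B)" using y by simp
        ultimately have "\<exists>z x y. z \<in> set A \<and> (x, y) \<in> pairs (Suc k # B) \<and> x < y \<and> y < z"
          using x by blast
        then have "has312 w" unfolding w has312_append[of A "Suc k # B"] by blast
        then show False using less.prems(3) by simp
      qed
    qed
    have "set A \<union> set B = set w - {Suc k}" using w nA nB by auto
    moreover have e: "{Suc k..k + length w} - {Suc k} = {Suc (Suc k)..<Suc (k + length w)}"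
      by (auto simp: atLeastLessThanSuc_atLeastAtMost)
    ultimately have un: "set A \<union> set B = {Suc (Suc k)..<Suc (k + length w)}"
      using less.prems(2) by (simp only:)
    have cA: "card (set A) = length A" by (rule distinct_card[OF dA])
    have sA: "set A = {Suc (Suc k)..<Suc (Suc k) + length A}"
      using downclosed[OF un lt] unfolding cA .
    have sB: "set B = {Suc (Suc k) + length A..<Suc (k + length w)}"
      using ivl_rest[of "set B" "set A" "Suc (Suc k)" "Suc (Suc k) + length A" "Suc (k + length w)"]
        AB un sA by (simp add: Int_commute)
    have lw: "length w = Suc (length A + length B)" using w by simp
    have sA': "set A = {Suc (Suc k)..Suc k + length A}" using sA by (simp add: atLeastLessThanSuc_atLeastAtMost)
    have sB': "set B = {Suc (Suc k + length A)..Suc k + length A + length B}" using sB lw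
      by (simp add: atLeastLessThanSuc_atLeastAtMost add.assoc)
    have "length A < length w" "length B < length w" using lw by auto
    obtain cs where cs: "pw (Suc k) cs = A" "fsize cs = length A"
      using less.hyps[OF \<open>length A < length w\<close> dA sA' nhA] by blast
    obtain ts where ts: "pw (Suc k + length A) ts = B" "fsize ts = length B"
      using less.hyps[OF \<open>length B < length w\<close> dB sB' nhB] by blast
    show ?thesis using cs ts w lw by (intro exI[of _ "Node cs # ts"]) simp
  qed
qed

definition fmap :: "oforest \<Rightarrow> nat \<Rightarrow> nat" where
  "fmap F = wperm (pw 0 F)"

lemma wperm_permutes:
  assumes "distinct w" "set w = {1..length w}"
  shows "wperm w permutes {1..length w}"
proof (rule bij_imp_permutes)
  have "inj_on (wperm w) {1..length w}"
    using assms(1) by (auto simp: inj_on_def wperm_def nth_eq_iff_index_eq)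
  moreover have "wperm w ` {1..length w} = set w"
  proof -
    have "wperm w ` {1..length w} = (\<lambda>i. w ! (i - 1)) ` {1..length w}"
      by (auto simp: wperm_def)
    also have "\<dots> = (\<lambda>i. w ! (i - 1)) ` Suc ` {0..<length w}"
      by (simp only: image_Suc_atLeastLessThan atLeastLessThanSuc_atLeastAtMost One_nat_def)
    also have "\<dots> = (\<lambda>i. w ! i) ` {0..<length w}"
      unfolding image_image by simp
    also have "\<dots> = set w" by (simp add: nth_image)
    finally show ?thesis .
  qed
  ultimately show "bij_betw (wperm w) {1..length w} {1..length w}"
    using assms(2) by (simp add: bij_betw_def)
next
  fix x assume "x \<notin> {1..length w}"
  then show "wperm w x = x" by (auto simp: wperm_def)
qed

lemma perm_word:
  assumes "\<sigma> permutes {1..n}"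
  shows "wperm (map \<sigma> [1..<Suc n]) = \<sigma>" "distinct (map \<sigma> [1..<Suc n])"
    "set (map \<sigma> [1..<Suc n]) = {1..n}" "length (map \<sigma> [1..<Suc n]) = n"
proof -
  show "wperm (map \<sigma> [1..<Suc n]) = \<sigma>"
  proof
    fix i show "wperm (map \<sigma> [1..<Suc n]) i = \<sigma> i"
      using permutes_not_in[OF assms, of i] by (auto simp del: upt_Suc simp: wperm_def)
  qed
  show "distinct (map \<sigma> [1..<Suc n])"
    using permutes_inj_on[OF assms] by (simp add: distinct_map atLeastLessThanSuc_atLeastAtMost)
  show "set (map \<sigma> [1..<Suc n]) = {1..n}"
    using permutes_image[OF assms] by (simp del: upt_Suc add: atLeastLessThanSuc_atLeastAtMost)
  show "length (map \<sigma> [1..<Suc n]) = n" by simp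
qed



theorem theorem4p7:
  fixes n :: nat
  shows "\<exists>f. bij_betw f (Ford n) (Av312 n) \<and>
    (\<forall>F\<in>Ford n. \<forall>G\<in>Ford n. forest_le F G \<longleftrightarrow> weak_le n (f F) (f G))"
proof (intro exI[of _ fmap] conjI)
  have props: "length (pw 0 F) = n \<and> set (pw 0 F) = {1..n} \<and> distinct (pw 0 F)" if "F \<in> Ford n" for F
    using pw_props[of 0 F] that unfolding Ford_def by auto
  show "bij_betw fmap (Ford n) (Av312 n)"
    unfolding bij_betw_def
  proof
    show "inj_on fmap (Ford n)"
    proof (rule inj_onI)
      fix F G assume F: "F \<in> Ford n" and G: "G \<in> Ford n" and eq: "fmap F = fmap G"
      have "pw 0 F = pw 0 G"
      proof (rule nth_equalityI)
        show "length (pw 0 F) = length (pw 0 G)" using props F G by simp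
        fix i assume "i < length (pw 0 F)"
        then have "fmap F (Suc i) = pw 0 F ! i" "fmap G (Suc i) = pw 0 G ! i"
          using props[OF F] props[OF G] by (auto simp: fmap_def wperm_def)
        then show "pw 0 F ! i = pw 0 G ! i" using eq by simp
      qed
      then have "D 0 F = D 0 G" using winv_pw by metis
      then show "F = G" using D_inj F G unfolding Ford_def by auto
    qed
    show "fmap ` Ford n = Av312 n"
    proof
      show "fmap ` Ford n \<subseteq> Av312 n"
      proof
        fix \<sigma> assume "\<sigma> \<in> fmap ` Ford n"
        then obtain F where F: "F \<in> Ford n" "\<sigma> = fmap F" by blast
        have "\<sigma> permutes {1..n}"
          using wperm_permutes[of "pw 0 F"] props[OF F(1)] F(2) unfolding fmap_def by auto
        moreover have "avoids312 n \<sigma>"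
          using avoids_wperm[of "pw 0 F"] no312_pw[of 0 F] props[OF F(1)] F(2) unfolding fmap_def by auto
        ultimately show "\<sigma> \<in> Av312 n" unfolding Av312_def by simp
      qed
      show "Av312 n \<subseteq> fmap ` Ford n"
      proof
        fix \<sigma> assume "\<sigma> \<in> Av312 n"
        then have p: "\<sigma> permutes {1..n}" and a: "avoids312 n \<sigma>" unfolding Av312_def by auto
        define w where "w = map \<sigma> [1..<Suc n]"
        have w: "wperm w = \<sigma>" "distinct w" "set w = {1..n}" "length w = n"
          using perm_word[OF p] unfolding w_def by auto
        have "\<not> has312 w" using avoids_wperm[of w] a w by simp
        then obtain F where "pw 0 F = w" "fsize F = length w" using realize[of w 0] w by auto
        then show "\<sigma> \<in> fmap ` Ford n" using w unfolding fmap_def Ford_def by auto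
      qed
    qed
  qed
  show "\<forall>F\<in>Ford n. \<forall>G\<in>Ford n. forest_le F G \<longleftrightarrow> weak_le n (fmap F) (fmap G)"
  proof (intro ballI)
    fix F G assume F: "F \<in> Ford n" and G: "G \<in> Ford n"
    show "forest_le F G \<longleftrightarrow> weak_le n (fmap F) (fmap G)"
    proof
      assume "forest_le F G"
      then have "forest_step\<^sup>*\<^sup>* G F" unfolding forest_le_def .
      then have "wstep\<^sup>*\<^sup>* (pw 0 G) (pw 0 F)"
        by (induction rule: rtranclp_induct) (auto intro: rtranclp_trans step_wsteps)
      then have "(weak_step (length (pw 0 G)))\<^sup>*\<^sup>* (wperm (pw 0 G)) (wperm (pw 0 F))"
        by (rule wsteps_weak)
      then show "weak_le n (fmap F) (fmap G)" using props[OF G] unfolding weak_le_def fmap_def by simp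
    next
      assume "weak_le n (fmap F) (fmap G)"
      then have "finv n (fmap F) \<subseteq> finv n (fmap G)" by (rule weak_le_finv)
      then have "D 0 F \<subseteq> D 0 G"
        using finv_wperm[of "pw 0 F"] finv_wperm[of "pw 0 G"] props[OF F] props[OF G] winv_pw
        unfolding fmap_def by simp
      then have "forest_step\<^sup>*\<^sup>* G F" using D_sub_steps F G unfolding Ford_def by auto
      then show "forest_le F G" unfolding forest_le_def .
    qed
  qed
qed

end
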